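(* Let $K$ be an infinite field, let $n\geq 1$, and let $f(x_1,\dots,x_n)=\sum_{\sigma\in S_n}\alpha_\sigma x_{\sigma(1)}\cdots x_{\sigma(n)}$, with $\alpha_\sigma\in K$, be a multilinear polynomial of degree $n$ in noncommuting variables. Let $UT_3=UT_3(K)$ be the algebra of $3\times 3$ upper triangular matrices over $K$, and let $\mathrm{Im}(f)=\{f(a_1,\dots,a_n): a_1,\dots,a_n\in UT_3\}$. Then $\mathrm{Im}(f)$ is equal to one of the following four sets: $UT_3$, $J$, $J^2$, or $\{0\}$.
   Context: $J=J(UT_3)$ denotes the Jacobson radical of $UT_3$, i.e., the set of strictly upper triangular $3\times 3$ matrices over $K$ (matrices whose entries $(i,j)$ are zero whenever $i\geq j$). $J^2$ is the square of $J$, i.e., the set of $3\times 3$ matrices over $K$ whose only possibly nonzero entry is the $(1,3)$ entry. *)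

theory Defs
  imports "HOL-Analysis.Analysis"
begin

text \<open>3x3 matrices over K are 'a^3^3, rows/columns indexed by the type 3 = {0,1,2}
  (ordered 0 < 1 < 2).\<close>

definition UT3 :: "(('a::field)^3^3) set" where
  "UT3 = {A. \<forall>i j. j < i \<longrightarrow> A $ i $ j = 0}"

definition J3 :: "(('a::field)^3^3) set" where
  "J3 = {A. \<forall>i j. j \<le> i \<longrightarrow> A $ i $ j = 0}"

definition J3sq :: "(('a::field)^3^3) set" where
  "J3sq = {A. \<forall>i j. (i, j) \<noteq> (0, 2) \<longrightarrow> A $ i $ j = 0}"

definition msmult :: "'a::field \<Rightarrow> 'a^3^3 \<Rightarrow> 'a^3^3" where
  "msmult c A = (\<chi> i j. c * A $ i $ j)"

text \<open>Evaluation of f(x_1,...,x_n) = sum over sigma in S_n of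
  alpha sigma * x_{sigma 1} ... x_{sigma n} at x_i = a i.\<close>
definition multilin_eval :: "nat \<Rightarrow> ((nat \<Rightarrow> nat) \<Rightarrow> 'a::field) \<Rightarrow> (nat \<Rightarrow> 'a^3^3) \<Rightarrow> 'a^3^3" where
  "multilin_eval n \<alpha> a =
     (\<Sum>\<sigma>\<in>{\<sigma>. \<sigma> permutes {1..n}}.
        msmult (\<alpha> \<sigma>) (foldr (\<lambda>k M. a (\<sigma> k) ** M) [1..<n+1] (mat 1)))"

definition multilin_image :: "nat \<Rightarrow> ((nat \<Rightarrow> nat) \<Rightarrow> 'a::field) \<Rightarrow> ('a^3^3) set" where
  "multilin_image n \<alpha> = {multilin_eval n \<alpha> a | a. \<forall>i\<in>{1..n}. a i \<in> UT3}"

end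

theory Submission
  imports Defs "HOL-Computational_Algebra.Polynomial"
begin
lemma ord3: "(0::3) < 1" "(1::3) < 2" "(0::3) < 2" "\<not> (1::3) < 0" "\<not> (2::3) < 0" "\<not> (2::3) < 1"
  "\<not> (0::3) < 0" "\<not> (1::3) < 1" "\<not> (2::3) < 2"
  by (simp_all add: less_bit1_def bit1.Rep_0 bit1.Rep_1 bit1.Rep_numeral)
lemma ex3: "(i::3) = 0 \<or> i = 1 \<or> i = 2" using exhaust_3[of i] by auto
lemma all3: "(\<forall>i::3. P i) \<longleftrightarrow> P 0 \<and> P 1 \<and> P 2" by (metis ex3)
lemma neq3[simp]: "(0::3) \<noteq> 1" "(1::3) \<noteq> 0" "(0::3) \<noteq> 2" "(2::3) \<noteq> 0" "(1::3) \<noteq> 2" "(2::3) \<noteq> 1" by simp_all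
lemma three0: "(3::3) = 0" by simp
lemma mm3: "((A::'a::field^3^3) ** B)$i$j = A$i$0*B$0$j + A$i$1*B$1$j + A$i$2*B$2$j"
  unfolding matrix_matrix_mult_def sum_3 three0 by (simp add: algebra_simps)
lemma UT3_iff: "A \<in> UT3 \<longleftrightarrow> A$1$0 = 0 \<and> A$2$0 = 0 \<and> A$2$1 = 0"
  unfolding UT3_def by (auto simp: all3 ord3)
lemma J3_iff: "A \<in> J3 \<longleftrightarrow> A$1$0 = 0 \<and> A$2$0 = 0 \<and> A$2$1 = 0 \<and> A$0$0 = 0 \<and> A$1$1 = 0 \<and> A$2$2 = 0"
  unfolding J3_def by (auto simp: all3 ord3 le_less)
lemma J3sq_iff: "A \<in> J3sq \<longleftrightarrow> A$1$0 = 0 \<and> A$2$0 = 0 \<and> A$2$1 = 0 \<and> A$0$0 = 0 \<and> A$1$1 = 0 \<and> A$2$2 = 0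
   \<and> A$0$1 = 0 \<and> A$1$2 = 0"
  unfolding J3sq_def by (auto simp: all3)
lemma mat1_UT3: "mat 1 \<in> UT3" by (simp add: UT3_iff mat_def)
lemma mult_UT3: "A \<in> UT3 \<Longrightarrow> B \<in> UT3 \<Longrightarrow> A ** B \<in> UT3" by (simp add: UT3_iff mm3)
lemma diag_mult: "A \<in> UT3 \<Longrightarrow> B \<in> UT3 \<Longrightarrow> (A ** B)$i$i = A$i$i * B$i$i"
  using ex3[of i] by (auto simp: UT3_iff mm3)
lemma vec3_eqI: "(\<And>i j. i \<in> {0,1,2::3} \<Longrightarrow> j \<in> {0,1,2::3} \<Longrightarrow> (A::'a^3^3)$i$j = B$i$j) \<Longrightarrow> A = B"
  by (simp add: vec_eq_iff all3)

definition Fl :: "(nat \<Rightarrow> ('a::field)^3^3) \<Rightarrow> nat list \<Rightarrow> 'a^3^3" where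
  "Fl b xs = foldr (\<lambda>k M. b k ** M) xs (mat 1)"
lemma Fl_simps[simp]: "Fl b [] = mat 1" "Fl b (x#xs) = b x ** Fl b xs"
  by (simp_all add: Fl_def)
lemma Fl_UT3: "\<forall>k\<in>set xs. b k \<in> UT3 \<Longrightarrow> Fl b xs \<in> UT3"
  by (induct xs) (auto simp: mat1_UT3 mult_UT3)
lemma Fl_diag: "\<forall>k\<in>set xs. b k \<in> UT3 \<Longrightarrow> (Fl b xs)$i$i = prod_list (map (\<lambda>k. b k$i$i) xs)"
  by (induct xs) (auto simp: diag_mult Fl_UT3 mat_def)

lemma Fl_entry:
  assumes "\<forall>k\<in>set xs. b k \<in> UT3"
    and "\<forall>j<length xs. (b (xs!j) ** Fl b (drop (Suc j) xs))$p$q = b (xs!j)$p$p * (Fl b (drop (Suc j) xs))$p$q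
             + b (xs!j)$p$q * (Fl b (drop (Suc j) xs))$q$q"
    and "p \<noteq> q"
  shows "(Fl b xs)$p$q = (\<Sum>j<length xs. prod_list (map (\<lambda>k. b k$p$p) (take j xs)) * b (xs!j)$p$q
            * prod_list (map (\<lambda>k. b k$q$q) (drop (Suc j) xs)))"
  using assms
proof (induct xs)
  case Nil
  then show ?case by (simp add: mat_def)
next
  case (Cons x xs)
  have h0: "(b x ** Fl b xs)$p$q = b x$p$p * (Fl b xs)$p$q + b x$p$q * (Fl b xs)$q$q"
    using Cons.prems(2) by (metis drop_Suc_Cons drop_0 length_Cons nth_Cons_0 zero_less_Suc)
  have ih: "(Fl b xs)$p$q = (\<Sum>j<length xs. prod_list (map (\<lambda>k. b k$p$p) (take j xs)) * b (xs!j)$p$q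
            * prod_list (map (\<lambda>k. b k$q$q) (drop (Suc j) xs)))"
  proof (rule Cons.hyps)
    show "\<forall>k\<in>set xs. b k \<in> UT3" using Cons.prems by simp
    show "p \<noteq> q" by fact
    show "\<forall>j<length xs. (b (xs!j) ** Fl b (drop (Suc j) xs))$p$q = b (xs!j)$p$p * (Fl b (drop (Suc j) xs))$p$q
             + b (xs!j)$p$q * (Fl b (drop (Suc j) xs))$q$q"
    proof (intro allI impI)
      fix j assume "j < length xs"
      then show "(b (xs!j) ** Fl b (drop (Suc j) xs))$p$q = b (xs!j)$p$p * (Fl b (drop (Suc j) xs))$p$q
             + b (xs!j)$p$q * (Fl b (drop (Suc j) xs))$q$q"
        using Cons.prems(2)[rule_format, of "Suc j"] by simp
    qed
  qed
  have dq: "(Fl b xs)$q$q = prod_list (map (\<lambda>k. b k$q$q) xs)"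
    using Cons.prems(1) by (intro Fl_diag) simp
  show ?case
    unfolding Fl_simps h0 ih dq length_Cons sum.lessThan_Suc_shift
    by (simp add: sum_distrib_left algebra_simps)
qed
definition gg :: "nat \<Rightarrow> (nat \<Rightarrow> ('a::field)^3^3) \<Rightarrow> 3 \<Rightarrow> 3 \<Rightarrow> nat \<Rightarrow> nat set \<Rightarrow> 'a" where
  "gg n a p q m B = (\<Prod>l\<in>B. a l$p$p) * a m$p$q * (\<Prod>l\<in>{1..n}-B-{m}. a l$q$q)"

lemma Fl_perm_entry:
  assumes sg: "\<sigma> permutes {1..n}" and a: "\<forall>i\<in>{1..n}. a i \<in> UT3" and pq: "p \<noteq> q"
    and spl: "\<forall>j<n. (a (\<sigma> (Suc j)) ** Fl (\<lambda>k. a (\<sigma> k)) [Suc (Suc j)..<n+1])$p$q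
        = a (\<sigma> (Suc j))$p$p * (Fl (\<lambda>k. a (\<sigma> k)) [Suc (Suc j)..<n+1])$p$q
        + a (\<sigma> (Suc j))$p$q * (Fl (\<lambda>k. a (\<sigma> k)) [Suc (Suc j)..<n+1])$q$q"
  shows "(Fl (\<lambda>k. a (\<sigma> k)) [1..<n+1])$p$q = (\<Sum>j\<in>{1..n}. gg n a p q (\<sigma> j) (\<sigma>`{1..<j}))"
proof -
  have inS: "\<sigma> k \<in> {1..n} \<longleftrightarrow> k \<in> {1..n}" for k using permutes_in_image[OF sg] .
  have ut: "\<forall>k\<in>set [1..<n+1]. (\<lambda>k. a (\<sigma> k)) k \<in> UT3" using a inS by auto
  have "(Fl (\<lambda>k. a (\<sigma> k)) [1..<n+1])$p$q = (\<Sum>j<length [1..<n+1]. prod_list (map (\<lambda>k. a (\<sigma> k)$p$p) (take j [1..<n+1])) * a (\<sigma> ([1..<n+1]!j))$p$q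
            * prod_list (map (\<lambda>k. a (\<sigma> k)$q$q) (drop (Suc j) [1..<n+1])))"
  proof (rule Fl_entry[OF ut _ pq])
    show "\<forall>j<length [1..<n + 1].
       (a (\<sigma> ([1..<n + 1] ! j)) ** Fl (\<lambda>k. a (\<sigma> k)) (drop (Suc j) [1..<n + 1])) $ p $ q =
       a (\<sigma> ([1..<n + 1] ! j)) $ p $ p * Fl (\<lambda>k. a (\<sigma> k)) (drop (Suc j) [1..<n + 1]) $ p $ q +
       a (\<sigma> ([1..<n + 1] ! j)) $ p $ q * Fl (\<lambda>k. a (\<sigma> k)) (drop (Suc j) [1..<n + 1]) $ q $ q"
      using spl by (simp add: nth_upt drop_upt del: upt_Suc)
  qed
  also have "\<dots> = (\<Sum>j<n. (\<Prod>k\<in>{1..<Suc j}. a (\<sigma> k)$p$p) * a (\<sigma> (Suc j))$p$q * (\<Prod>k\<in>{Suc (Suc j)..<n+1}. a (\<sigma> k)$q$q))"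
  proof (intro sum.cong)
    fix j assume "j \<in> {..<n}"
    then have j: "j < n" by simp
    have pl: "prod_list (map f [u..<v]) = prod f {u..<v}" for f :: "nat \<Rightarrow> 'a" and u v
      by (simp add: prod.distinct_set_conv_list[symmetric] del: upt_Suc)
    have t: "take j [1..<n+1] = [1..<Suc j]" using j by (simp add: take_upt del: upt_Suc)
    have d: "drop (Suc j) [1..<n+1] = [Suc (Suc j)..<n+1]" by (simp add: drop_upt del: upt_Suc)
    have nn: "[1..<n+1]!j = Suc j" using j by (simp add: nth_upt del: upt_Suc)
    show "prod_list (map (\<lambda>k. a (\<sigma> k)$p$p) (take j [1..<n+1])) * a (\<sigma> ([1..<n+1]!j))$p$q
            * prod_list (map (\<lambda>k. a (\<sigma> k)$q$q) (drop (Suc j) [1..<n+1])) =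
       (\<Prod>k\<in>{1..<Suc j}. a (\<sigma> k)$p$p) * a (\<sigma> (Suc j))$p$q * (\<Prod>k\<in>{Suc (Suc j)..<n+1}. a (\<sigma> k)$q$q)"
      unfolding t d nn pl ..
  qed simp
  also have "\<dots> = (\<Sum>j\<in>{1..n}. (\<Prod>k\<in>{1..<j}. a (\<sigma> k)$p$p) * a (\<sigma> j)$p$q * (\<Prod>k\<in>{Suc j..<n+1}. a (\<sigma> k)$q$q))"
    by (simp add: sum.atLeast1_atMost_eq)
  also have "\<dots> = (\<Sum>j\<in>{1..n}. gg n a p q (\<sigma> j) (\<sigma>`{1..<j}))"
  proof (intro sum.cong refl)
    fix j assume j: "j \<in> {1..n}"
    have inj: "inj \<sigma>" using permutes_inj[OF sg] .
    have e1: "(\<Prod>k\<in>{1..<j}. a (\<sigma> k)$p$p) = (\<Prod>l\<in>\<sigma>`{1..<j}. a l$p$p)"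
      by (subst prod.reindex) (auto intro: inj_on_subset[OF inj])
    have "{Suc j..<n+1} = {1..n} - {1..<j} - {j}" using j by auto
    then have "\<sigma>`{Suc j..<n+1} = \<sigma>`{1..n} - \<sigma>`{1..<j} - {\<sigma> j}"
      by (simp add: image_set_diff[OF inj])
    then have s2: "\<sigma>`{Suc j..<n+1} = {1..n} - \<sigma>`{1..<j} - {\<sigma> j}"
      by (metis permutes_image[OF sg])
    have e2: "(\<Prod>k\<in>{Suc j..<n+1}. a (\<sigma> k)$q$q) = (\<Prod>l\<in>\<sigma>`{Suc j..<n+1}. a l$q$q)"
      by (subst prod.reindex) (auto intro: inj_on_subset[OF inj])
    show "(\<Prod>k\<in>{1..<j}. a (\<sigma> k)$p$p) * a (\<sigma> j)$p$q * (\<Prod>k\<in>{Suc j..<n+1}. a (\<sigma> k)$q$q) = gg n a p q (\<sigma> j) (\<sigma>`{1..<j})"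
      unfolding gg_def e1 e2 s2 ..
  qed
  finally show ?thesis .
qed
definition cc :: "nat \<Rightarrow> ((nat\<Rightarrow>nat) \<Rightarrow> 'a::field) \<Rightarrow> nat \<Rightarrow> nat set \<Rightarrow> 'a" where
  "cc n \<alpha> m B = (\<Sum>x\<in>{x \<in> {\<sigma>. \<sigma> permutes {1..n}} \<times> {1..n}. (fst x (snd x), fst x ` {1..<snd x}) = (m,B)}. \<alpha> (fst x))"

lemma eval_entry_gen:
  assumes a: "\<forall>i\<in>{1..n}. a i \<in> UT3" and pq: "p \<noteq> q"
    and spl: "\<And>\<sigma> j. \<sigma> permutes {1..n} \<Longrightarrow> j < n \<Longrightarrow> (a (\<sigma> (Suc j)) ** Fl (\<lambda>k. a (\<sigma> k)) [Suc (Suc j)..<n+1])$p$q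
        = a (\<sigma> (Suc j))$p$p * (Fl (\<lambda>k. a (\<sigma> k)) [Suc (Suc j)..<n+1])$p$q
        + a (\<sigma> (Suc j))$p$q * (Fl (\<lambda>k. a (\<sigma> k)) [Suc (Suc j)..<n+1])$q$q"
  shows "(multilin_eval n \<alpha> a)$p$q = (\<Sum>y \<in> {1..n} \<times> Pow {1..n}. cc n \<alpha> (fst y) (snd y) * gg n a p q (fst y) (snd y))"
proof -
  let ?P = "{\<sigma>. \<sigma> permutes {1..n}}"
  have finP: "finite ?P" by (simp add: finite_permutations)
  have "(multilin_eval n \<alpha> a)$p$q = (\<Sum>\<sigma>\<in>?P. \<alpha> \<sigma> * (Fl (\<lambda>k. a (\<sigma> k)) [1..<n+1])$p$q)"
    unfolding multilin_eval_def msmult_def Fl_def by simp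
  also have "\<dots> = (\<Sum>\<sigma>\<in>?P. \<Sum>j\<in>{1..n}. \<alpha> \<sigma> * gg n a p q (\<sigma> j) (\<sigma>`{1..<j}))"
  proof (intro sum.cong refl)
    fix \<sigma> assume "\<sigma> \<in> ?P"
    then have sg: "\<sigma> permutes {1..n}" by simp
    have "(Fl (\<lambda>k. a (\<sigma> k)) [1..<n+1])$p$q = (\<Sum>j\<in>{1..n}. gg n a p q (\<sigma> j) (\<sigma>`{1..<j}))"
      using Fl_perm_entry[OF sg a pq] spl[OF sg] by blast
    then show "\<alpha> \<sigma> * (Fl (\<lambda>k. a (\<sigma> k)) [1..<n+1])$p$q = (\<Sum>j\<in>{1..n}. \<alpha> \<sigma> * gg n a p q (\<sigma> j) (\<sigma>`{1..<j}))"
      by (simp add: sum_distrib_left del: upt_Suc)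
  qed
  also have "\<dots> = (\<Sum>x\<in>?P \<times> {1..n}. \<alpha> (fst x) * gg n a p q (fst x (snd x)) (fst x ` {1..<snd x}))"
    by (simp add: sum.cartesian_product case_prod_beta)
  also have "\<dots> = (\<Sum>y \<in> {1..n} \<times> Pow {1..n}. \<Sum>x\<in>{x \<in> ?P \<times> {1..n}. (fst x (snd x), fst x ` {1..<snd x}) = y}.
        \<alpha> (fst x) * gg n a p q (fst x (snd x)) (fst x ` {1..<snd x}))"
  proof (rule sum.group[symmetric])
    show "finite (?P \<times> {1..n})" using finP by simp
    show "finite ({1..n} \<times> Pow {1..n})" by simp
    show "(\<lambda>x. (fst x (snd x), fst x ` {1..<snd x})) ` (?P \<times> {1..n}) \<subseteq> {1..n} \<times> Pow {1..n}"
    proof clarsimp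
      fix \<sigma> j assume sg: "\<sigma> permutes {Suc 0..n}" and j: "Suc 0 \<le> j" "j \<le> n"
      have "\<sigma> k \<in> {Suc 0..n}" if "k \<in> {Suc 0..n}" for k using permutes_in_image[OF sg] that by simp
      then show "Suc 0 \<le> \<sigma> j \<and> \<sigma> j \<le> n \<and> \<sigma> ` {Suc 0..<j} \<subseteq> {Suc 0..n}"
        using j by fastforce
    qed
  qed
  also have "\<dots> = (\<Sum>y \<in> {1..n} \<times> Pow {1..n}. cc n \<alpha> (fst y) (snd y) * gg n a p q (fst y) (snd y))"
  proof (intro sum.cong refl)
    fix y :: "nat \<times> nat set"
    show "(\<Sum>x\<in>{x \<in> ?P \<times> {1..n}. (fst x (snd x), fst x ` {1..<snd x}) = y}.
        \<alpha> (fst x) * gg n a p q (fst x (snd x)) (fst x ` {1..<snd x})) = cc n \<alpha> (fst y) (snd y) * gg n a p q (fst y) (snd y)"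
      unfolding cc_def sum_distrib_right
      by (intro sum.cong) auto
  qed
  finally show ?thesis .
qed

lemma spl_UT3: "(p,q) \<in> {(0,1),(1,2)} \<Longrightarrow> A \<in> UT3 \<Longrightarrow> P \<in> UT3 \<Longrightarrow> (A ** P)$p$q = A$p$p*P$p$q + A$p$q*P$q$q"
  by (auto simp: UT3_iff mm3)

lemma eval_entry:
  assumes a: "\<forall>i\<in>{1..n}. a i \<in> UT3" and pq: "(p,q) \<in> {(0,1),(1,2)}"
  shows "(multilin_eval n \<alpha> a)$p$q = (\<Sum>y \<in> {1..n} \<times> Pow {1..n}. cc n \<alpha> (fst y) (snd y) * gg n a p q (fst y) (snd y))"
proof (rule eval_entry_gen[OF a])
  show "p \<noteq> q" using pq by auto
  fix \<sigma> j assume sg: "\<sigma> permutes {1..n}" and j: "j < n"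
  have inS: "\<sigma> k \<in> {1..n} \<longleftrightarrow> k \<in> {1..n}" for k using permutes_in_image[OF sg] .
  show "(a (\<sigma> (Suc j)) ** Fl (\<lambda>k. a (\<sigma> k)) [Suc (Suc j)..<n+1])$p$q
        = a (\<sigma> (Suc j))$p$p * (Fl (\<lambda>k. a (\<sigma> k)) [Suc (Suc j)..<n+1])$p$q
        + a (\<sigma> (Suc j))$p$q * (Fl (\<lambda>k. a (\<sigma> k)) [Suc (Suc j)..<n+1])$q$q"
  proof (rule spl_UT3[OF pq])
    show "a (\<sigma> (Suc j)) \<in> UT3" using a inS j by auto
    show "Fl (\<lambda>k. a (\<sigma> k)) [Suc (Suc j)..<n+1] \<in> UT3"
      by (rule Fl_UT3) (use a inS in \<open>auto simp del: upt_Suc\<close>)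
  qed
qed
lemma eval_alt: "multilin_eval n \<alpha> a = (\<chi> i j. \<Sum>\<sigma>\<in>{\<sigma>. \<sigma> permutes {1..n}}. \<alpha> \<sigma> * (Fl (\<lambda>k. a (\<sigma> k)) [1..<n+1])$i$j)"
  unfolding multilin_eval_def msmult_def Fl_def by (simp add: vec_eq_iff)

lemma eval_UT3: "\<forall>i\<in>{1..n}. a i \<in> UT3 \<Longrightarrow> multilin_eval n \<alpha> a \<in> UT3"
proof -
  assume a: "\<forall>i\<in>{1..n}. a i \<in> UT3"
  have "Fl (\<lambda>k. a (\<sigma> k)) [1..<n+1] \<in> UT3" if "\<sigma> permutes {1..n}" for \<sigma>
    using permutes_in_image[OF that] a by (intro Fl_UT3) (auto simp del: upt_Suc)
  then show ?thesis unfolding eval_alt by (simp add: UT3_iff)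
qed

lemma eval_diag:
  assumes a: "\<forall>i\<in>{1..n}. a i \<in> UT3"
  shows "(multilin_eval n \<alpha> a)$i$i = (\<Sum>\<sigma>\<in>{\<sigma>. \<sigma> permutes {1..n}}. \<alpha> \<sigma>) * (\<Prod>l\<in>{1..n}. a l$i$i)"
proof -
  have "(Fl (\<lambda>k. a (\<sigma> k)) [1..<n+1])$i$i = (\<Prod>l\<in>{1..n}. a l$i$i)" if sg: "\<sigma> permutes {1..n}" for \<sigma>
  proof -
    have "(Fl (\<lambda>k. a (\<sigma> k)) [1..<n+1])$i$i = prod_list (map (\<lambda>k. a (\<sigma> k)$i$i) [1..<n+1])"
      using permutes_in_image[OF sg] a by (intro Fl_diag) (auto simp del: upt_Suc)
    also have "\<dots> = (\<Prod>k\<in>{1..n}. a (\<sigma> k)$i$i)"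
      by (simp add: prod.distinct_set_conv_list[symmetric] atLeastLessThanSuc_atLeastAtMost del: upt_Suc)
    also have "\<dots> = (\<Prod>l\<in>{1..n}. a l$i$i)"
      using prod.permute[OF sg, of "\<lambda>l. a l$i$i"] by (simp add: comp_def)
    finally show ?thesis .
  qed
  then show ?thesis unfolding eval_alt by (simp add: sum_distrib_right)
qed

lemma msmult_left: "msmult s A ** B = msmult s (A ** B)"
  by (simp add: vec_eq_iff msmult_def matrix_matrix_mult_def sum_distrib_left mult.assoc)
lemma msmult_right: "A ** msmult s B = msmult s (A ** B)"
  by (simp add: vec_eq_iff msmult_def matrix_matrix_mult_def sum_distrib_left algebra_simps)

lemma Fl_notin: "i \<notin> \<sigma> ` set xs \<Longrightarrow> Fl (\<lambda>k. (a(i:=X)) (\<sigma> k)) xs = Fl (\<lambda>k. a (\<sigma> k)) xs"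
  by (induct xs) auto

lemma Fl_scale: "distinct xs \<Longrightarrow> inj \<sigma> \<Longrightarrow> i \<in> \<sigma> ` set xs \<Longrightarrow>
   Fl (\<lambda>k. (a(i := msmult s (a i))) (\<sigma> k)) xs = msmult s (Fl (\<lambda>k. a (\<sigma> k)) xs)"
proof (induct xs)
  case Nil then show ?case by simp
next
  case (Cons x xs)
  show ?case
  proof (cases "\<sigma> x = i")
    case True
    then have "i \<notin> \<sigma> ` set xs" using Cons.prems by (auto dest: injD)
    then have e: "Fl (\<lambda>k. (a(i := msmult s (a i))) (\<sigma> k)) xs = Fl (\<lambda>k. a (\<sigma> k)) xs" by (rule Fl_notin)
    show ?thesis unfolding Fl_simps e using True by (simp add: msmult_left)
  next
    case False
    then show ?thesis using Cons by (simp add: msmult_right)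
  qed
qed

lemma Fl_id: "Fl (\<lambda>k. mat 1) xs = mat 1"
  by (induct xs) (auto simp: matrix_mul_lid)

lemma Fl_single: "distinct xs \<Longrightarrow> inj \<sigma> \<Longrightarrow> i \<in> \<sigma> ` set xs \<Longrightarrow>
   Fl (\<lambda>k. ((\<lambda>_. mat 1)(i := X)) (\<sigma> k)) xs = X"
proof (induct xs)
  case Nil then show ?case by simp
next
  case (Cons x xs)
  show ?case
  proof (cases "\<sigma> x = i")
    case True
    then have "i \<notin> \<sigma> ` set xs" using Cons.prems by (auto dest: injD)
    then show ?thesis using True Fl_notin[of i \<sigma> xs "\<lambda>_. mat 1" X] by (simp add: Fl_id matrix_mul_rid)
  next
    case False
    then show ?thesis using Cons by (simp add: matrix_mul_lid)
  qed
qed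

lemma eval_scale:
  assumes n: "n \<ge> 1"
  shows "multilin_eval n \<alpha> (a(1 := msmult s (a 1))) = msmult s (multilin_eval n \<alpha> a)"
proof -
  have "Fl (\<lambda>k. (a(1 := msmult s (a 1))) (\<sigma> k)) [1..<n+1] = msmult s (Fl (\<lambda>k. a (\<sigma> k)) [1..<n+1])"
    if sg: "\<sigma> permutes {1..n}" for \<sigma>
  proof (rule Fl_scale)
    show "inj \<sigma>" using permutes_inj[OF sg] .
    have "\<sigma> ` {1..n} = {1..n}" using permutes_image[OF sg] .
    then show "1 \<in> \<sigma> ` set [1..<n+1]" using n by (simp add: atLeastLessThanSuc_atLeastAtMost del: upt_Suc)
  qed simp
  then show ?thesis unfolding eval_alt by (simp add: vec_eq_iff msmult_def sum_distrib_left algebra_simps)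
qed

lemma eval_single:
  assumes n: "n \<ge> 1"
  shows "multilin_eval n \<alpha> ((\<lambda>_. mat 1)(1 := X)) = msmult (\<Sum>\<sigma>\<in>{\<sigma>. \<sigma> permutes {1..n}}. \<alpha> \<sigma>) X"
proof -
  have "Fl (\<lambda>k. ((\<lambda>_. mat 1)(1 := X)) (\<sigma> k)) [1..<n+1] = X"
    if sg: "\<sigma> permutes {1..n}" for \<sigma>
  proof (rule Fl_single)
    show "inj \<sigma>" using permutes_inj[OF sg] .
    have "\<sigma> ` {1..n} = {1..n}" using permutes_image[OF sg] .
    then show "1 \<in> \<sigma> ` set [1..<n+1]" using n by (simp add: atLeastLessThanSuc_atLeastAtMost del: upt_Suc)
  qed simp
  then show ?thesis unfolding eval_alt by (simp add: vec_eq_iff msmult_def sum_distrib_right)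
qed
lemma split_sum_if:
  assumes "finite V" "X \<subseteq> V"
  shows "(\<Sum>l\<in>X. w1 l) + (\<Sum>l\<in>V-X. (w2 l::nat)) = (\<Sum>l\<in>V. if l \<in> X then w1 l else w2 l)"
proof -
  have "V \<inter> {l. l \<in> X} = X" "V \<inter> - {l. l \<in> X} = V - X" using assms(2) by auto
  then show ?thesis using sum.If_cases[OF assms(1), of "\<lambda>l. l \<in> X" w1 w2] by simp
qed

lemma umax:
  assumes fin: "finite V" and B: "B \<subseteq> V" and T: "T \<subseteq> V"
    and w1: "\<forall>l\<in>T. w2 l < w1 l" and w2: "\<forall>l\<in>V-T. w1 l < (w2 l::nat)"
    and eq: "(\<Sum>l\<in>B. w1 l) + (\<Sum>l\<in>V-B. w2 l) = (\<Sum>l\<in>T. w1 l) + (\<Sum>l\<in>V-T. w2 l)"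
  shows "B = T"
proof (rule ccontr)
  assume ne: "B \<noteq> T"
  then obtain l where l: "l \<in> V" "(l \<in> B) \<noteq> (l \<in> T)" using B T by blast
  have "(\<Sum>l\<in>V. if l \<in> B then w1 l else w2 l) < (\<Sum>l\<in>V. if l \<in> T then w1 l else w2 l)"
  proof (rule sum_strict_mono_ex1[OF fin])
    show "\<forall>x\<in>V. (if x \<in> B then w1 x else w2 x) \<le> (if x \<in> T then w1 x else w2 x)"
      using w1 w2 by (auto simp: less_imp_le)
    show "\<exists>x\<in>V. (if x \<in> B then w1 x else w2 x) < (if x \<in> T then w1 x else w2 x)"
      using l w1 w2 by (intro bexI[of _ l]) auto
  qed
  then show False using eq split_sum_if[OF fin B] split_sum_if[OF fin T] by simp
qed

lemma coeff_key:
  fixes c :: "nat set \<Rightarrow> 'a::field"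
  assumes supp: "\<forall>B. c B \<noteq> 0 \<longrightarrow> B \<subseteq> V" and T: "T \<subseteq> V" and VU: "V \<subseteq> U" and fU: "finite U"
    and w1: "\<forall>l\<in>T. w2 l < w1 l" and w2: "\<forall>l\<in>V-T. w1 l < (w2 l::nat)"
  shows "coeff (\<Sum>B\<in>Pow U. monom (c B) ((\<Sum>l\<in>B. w1 l) + (\<Sum>l\<in>V-B. w2 l))) ((\<Sum>l\<in>T. w1 l) + (\<Sum>l\<in>V-T. w2 l)) = c T"
proof -
  have fV: "finite V" using VU fU finite_subset by blast
  have "coeff (\<Sum>B\<in>Pow U. monom (c B) ((\<Sum>l\<in>B. w1 l) + (\<Sum>l\<in>V-B. w2 l))) ((\<Sum>l\<in>T. w1 l) + (\<Sum>l\<in>V-T. w2 l))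
     = (\<Sum>B\<in>Pow U. if B = T then c B else 0)"
    unfolding coeff_sum coeff_monom
  proof (intro sum.cong refl)
    fix B assume "B \<in> Pow U"
    show "(if (\<Sum>l\<in>B. w1 l) + (\<Sum>l\<in>V-B. w2 l) = (\<Sum>l\<in>T. w1 l) + (\<Sum>l\<in>V-T. w2 l) then c B else 0)
       = (if B = T then c B else 0)"
    proof (cases "c B = 0")
      case False
      then have "B \<subseteq> V" using supp by blast
      then show ?thesis using umax[OF fV _ T w1 w2, of B] by auto
    qed simp
  qed
  also have "\<dots> = c T" using T VU fU by (simp add: sum.delta)
  finally show ?thesis .
qed

lemma cc_support:
  assumes "cc n \<alpha> m B \<noteq> 0"
  shows "B \<subseteq> {1..n} - {m}"
proof (rule ccontr)
  assume nb: "\<not> B \<subseteq> {1..n} - {m}"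
  have E: "{x \<in> {\<sigma>. \<sigma> permutes {1..n}} \<times> {1..n}. (fst x (snd x), fst x ` {1..<snd x}) = (m,B)} = {}"
  proof (rule ccontr)
    assume "\<not> ?thesis"
    then obtain \<sigma> j where sg: "\<sigma> permutes {1..n}" and j: "j \<in> {1..n}" and e: "\<sigma> j = m" "\<sigma>`{1..<j} = B"
      by auto
    have "\<sigma>`{1..<j} \<subseteq> {1..n} - {m}"
    proof
      fix y assume "y \<in> \<sigma>`{1..<j}"
      then obtain k where k: "k \<in> {1..<j}" "y = \<sigma> k" by auto
      have "k \<in> {1..n}" using k j by auto
      then have "y \<in> {1..n}" using permutes_in_image[OF sg] k by simp
      moreover have "y \<noteq> m" using k e permutes_inj[OF sg] by (auto dest: injD)
      ultimately show "y \<in> {1..n} - {m}" by simp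
    qed
    then show False using nb e by simp
  qed
  have "cc n \<alpha> m B = 0" unfolding cc_def E by simp
  then show False using assms by simp
qed

lemma Fl_diagonal:
  "\<forall>k\<in>set xs. (\<forall>i j. i \<noteq> j \<longrightarrow> b k$i$j = 0) \<Longrightarrow> i \<noteq> j \<Longrightarrow> (Fl b xs)$i$j = 0"
proof (induct xs arbitrary: i j)
  case Nil then show ?case by (simp add: mat_def)
next
  case (Cons x xs)
  have "(b x ** Fl b xs)$i$j = (\<Sum>k\<in>UNIV. b x$i$k * (Fl b xs)$k$j)"
    by (simp add: matrix_matrix_mult_def)
  also have "\<dots> = 0"
  proof (rule sum.neutral, rule ballI)
    fix k
    show "b x$i$k * (Fl b xs)$k$j = 0"
    proof (cases "k = i")
      case True then show ?thesis using Cons by simp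
    next
      case False then show ?thesis using Cons.prems by simp
    qed
  qed
  finally show ?case by simp
qed
lemma case1:
  fixes \<alpha> :: "(nat \<Rightarrow> nat) \<Rightarrow> 'a::field"
  assumes inf: "infinite (UNIV::'a set)" and m: "m \<in> {1..n}" and cT: "cc n \<alpha> m T \<noteq> 0"
    and S0: "(\<Sum>\<sigma>\<in>{\<sigma>. \<sigma> permutes {1..n}}. \<alpha> \<sigma>) = 0" and M: "M \<in> J3"
  shows "M \<in> multilin_image n \<alpha>"
proof -
  define V where "V = {1..n} - {m}"
  have TV: "T \<subseteq> V" using cc_support[OF cT] V_def by simp
  have supp: "\<forall>B. cc n \<alpha> m B \<noteq> 0 \<longrightarrow> B \<subseteq> V" using cc_support V_def by blast
  have VU: "V \<subseteq> {1..n}" by (auto simp: V_def)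
  define w :: "nat \<Rightarrow> 3 \<Rightarrow> nat" where "w l i = (if l \<in> T then (if i = 0 then 2 else if i = 1 then 1 else 0)
      else (if i = 0 then 0 else if i = 1 then 1 else 2))" for l i
  define E where "E p q B = (\<Sum>l\<in>B. w l p) + (\<Sum>l\<in>V-B. w l q)" for p q B
  define Q where "Q p q = (\<Sum>B\<in>Pow {1..n}. monom (cc n \<alpha> m B) (E p q B))" for p q
  have wc: "\<forall>l\<in>T. w l q < w l p" "\<forall>l\<in>V-T. w l p < w l q" if "(p,q) \<in> {(0,1),(1,2),(0,2)}" for p q
    using that by (auto simp: w_def)
  have cQ: "coeff (Q p q) (E p q T) = cc n \<alpha> m T" if "(p,q) \<in> {(0,1),(1,2),(0,2)}" for p q
    unfolding Q_def E_def by (rule coeff_key[OF supp TV VU _ wc(1)[OF that] wc(2)[OF that]]) simp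
  have Qnz: "Q p q \<noteq> 0" if "(p,q) \<in> {(0,1),(1,2),(0,2)}" for p q
    using cQ[OF that] cT by auto
  have "Q 0 1 * Q 1 2 * Q 0 2 \<noteq> 0" using Qnz by simp
  then have "finite {x. poly (Q 0 1 * Q 1 2 * Q 0 2) x = 0}" by (rule poly_roots_finite)
  then obtain t where t: "t \<notin> {x. poly (Q 0 1 * Q 1 2 * Q 0 2) x = 0}" using ex_new_if_finite[OF inf] by blast
  then have t01: "poly (Q 0 1) t \<noteq> 0" and t12: "poly (Q 1 2) t \<noteq> 0" and t02: "poly (Q 0 2) t \<noteq> 0" by auto
  define N :: "'a^3^3" where "N = (\<chi> i j. if i = 0 \<and> j = 1 then M$0$1 / poly (Q 0 1) t
      else if i = 1 \<and> j = 2 then M$1$2 / poly (Q 1 2) t else if i = 0 \<and> j = 2 then M$0$2 / poly (Q 0 2) t else 0)"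
  define a where "a l = (if l = m then N else (\<chi> i j. if i = j then t ^ w l i else 0))" for l
  have aUT: "a l \<in> UT3" for l by (simp add: UT3_iff a_def N_def)
  have adm: "\<forall>i\<in>{1..n}. a i \<in> UT3" using aUT by simp
  have offd: "a l$i$j = 0" if "l \<noteq> m" "i \<noteq> j" for l i j using that by (simp add: a_def)
  have dg: "a l$i$i = t ^ w l i" if "l \<noteq> m" for l i using that by (simp add: a_def)
  have am: "a m = N" by (simp add: a_def)
  have ent: "(multilin_eval n \<alpha> a)$p$q = poly (Q p q) t * N$p$q"
    if pq: "(p,q) \<in> {(0,1),(1,2),(0,2)}"
      and spl: "\<And>\<sigma> j. \<sigma> permutes {1..n} \<Longrightarrow> j < n \<Longrightarrow> (a (\<sigma> (Suc j)) ** Fl (\<lambda>k. a (\<sigma> k)) [Suc (Suc j)..<n+1])$p$q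
        = a (\<sigma> (Suc j))$p$p * (Fl (\<lambda>k. a (\<sigma> k)) [Suc (Suc j)..<n+1])$p$q
        + a (\<sigma> (Suc j))$p$q * (Fl (\<lambda>k. a (\<sigma> k)) [Suc (Suc j)..<n+1])$q$q"
    for p q
  proof -
    have pq': "p \<noteq> q" using pq by auto
    have "(multilin_eval n \<alpha> a)$p$q = (\<Sum>y\<in>{1..n}\<times>Pow{1..n}. cc n \<alpha> (fst y) (snd y) * gg n a p q (fst y) (snd y))"
      by (rule eval_entry_gen[OF adm pq' spl])
    also have "\<dots> = (\<Sum>m'\<in>{1..n}. \<Sum>B\<in>Pow{1..n}. cc n \<alpha> m' B * gg n a p q m' B)"
      by (simp add: sum.cartesian_product case_prod_beta)
    also have "\<dots> = (\<Sum>m'\<in>{1..n}. if m' = m then (\<Sum>B\<in>Pow{1..n}. cc n \<alpha> m B * gg n a p q m B) else 0)"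
      by (intro sum.cong refl) (auto simp: gg_def offd pq')
    also have "\<dots> = (\<Sum>B\<in>Pow{1..n}. cc n \<alpha> m B * gg n a p q m B)" using m by (simp add: sum.delta)
    also have "\<dots> = (\<Sum>B\<in>Pow{1..n}. cc n \<alpha> m B * t ^ E p q B) * N$p$q"
      unfolding sum_distrib_right
    proof (intro sum.cong refl)
      fix B assume "B \<in> Pow {1..n}"
      show "cc n \<alpha> m B * gg n a p q m B = cc n \<alpha> m B * t ^ E p q B * N$p$q"
      proof (cases "cc n \<alpha> m B = 0")
        case False
        then have BV: "B \<subseteq> V" using supp by blast
        have r1: "{1..n} - B - {m} = V - B" by (auto simp: V_def)
        have p1: "(\<Prod>l\<in>B. a l$p$p) = t ^ (\<Sum>l\<in>B. w l p)" unfolding power_sum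
        proof (intro prod.cong refl)
          fix l assume "l \<in> B" then have "l \<noteq> m" using BV V_def by auto
          then show "a l$p$p = t ^ w l p" by (rule dg)
        qed
        have p2: "(\<Prod>l\<in>V-B. a l$q$q) = t ^ (\<Sum>l\<in>V-B. w l q)" unfolding power_sum
        proof (intro prod.cong refl)
          fix l assume "l \<in> V - B" then have "l \<noteq> m" using V_def by auto
          then show "a l$q$q = t ^ w l q" by (rule dg)
        qed
        show ?thesis unfolding gg_def r1 p1 p2 E_def am by (simp add: power_add algebra_simps)
      qed simp
    qed
    also have "\<dots> = poly (Q p q) t * N$p$q" by (simp add: Q_def poly_sum poly_monom)
    finally show ?thesis .
  qed
  have splU: "(a (\<sigma> (Suc j)) ** Fl (\<lambda>k. a (\<sigma> k)) [Suc (Suc j)..<n+1])$p$q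
        = a (\<sigma> (Suc j))$p$p * (Fl (\<lambda>k. a (\<sigma> k)) [Suc (Suc j)..<n+1])$p$q
        + a (\<sigma> (Suc j))$p$q * (Fl (\<lambda>k. a (\<sigma> k)) [Suc (Suc j)..<n+1])$q$q"
    if "(p,q) \<in> {(0,1),(1,2)}" for p q \<sigma> j
    by (rule spl_UT3[OF that aUT Fl_UT3]) (simp add: aUT)
  have spl02: "(a (\<sigma> (Suc j)) ** Fl (\<lambda>k. a (\<sigma> k)) [Suc (Suc j)..<n+1])$0$2
        = a (\<sigma> (Suc j))$0$0 * (Fl (\<lambda>k. a (\<sigma> k)) [Suc (Suc j)..<n+1])$0$2
        + a (\<sigma> (Suc j))$0$2 * (Fl (\<lambda>k. a (\<sigma> k)) [Suc (Suc j)..<n+1])$2$2"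
    if sg: "\<sigma> permutes {1..n}" for \<sigma> j
  proof -
    have z: "a (\<sigma> (Suc j))$0$1 * (Fl (\<lambda>k. a (\<sigma> k)) [Suc (Suc j)..<n+1])$1$2 = 0"
    proof (cases "\<sigma> (Suc j) = m")
      case True
      have "\<forall>k\<in>set [Suc (Suc j)..<n+1]. (\<forall>i j. i \<noteq> j \<longrightarrow> a (\<sigma> k)$i$j = 0)"
      proof (intro ballI allI impI)
        fix k i j' assume k: "k \<in> set [Suc (Suc j)..<n+1]" and ij: "i \<noteq> (j'::3)"
        have kk: "Suc j < k" using k by (simp del: upt_Suc)
        have "\<sigma> k \<noteq> m"
        proof
          assume "\<sigma> k = m"
          then have "\<sigma> k = \<sigma> (Suc j)" using True by simp
          then have "k = Suc j" using injD[OF permutes_inj[OF sg]] by blast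
          then show False using kk by simp
        qed
        then show "a (\<sigma> k)$i$j' = 0" using offd ij by simp
      qed
      then have "(Fl (\<lambda>k. a (\<sigma> k)) [Suc (Suc j)..<n+1])$1$2 = 0" by (rule Fl_diagonal) simp
      then show ?thesis by simp
    next
      case False then show ?thesis using offd by simp
    qed
    show ?thesis using z by (simp add: mm3)
  qed
  have J: "multilin_eval n \<alpha> a \<in> J3"
    using eval_UT3[OF adm, of \<alpha>] eval_diag[OF adm, of \<alpha>] S0 by (simp add: UT3_iff J3_iff)
  have e01: "(multilin_eval n \<alpha> a)$0$1 = M$0$1"
    using ent[of 0 1] splU[of 0 1] t01 by (simp add: N_def)
  have e12: "(multilin_eval n \<alpha> a)$1$2 = M$1$2"
    using ent[of 1 2] splU[of 1 2] t12 by (simp add: N_def)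
  have e02: "(multilin_eval n \<alpha> a)$0$2 = M$0$2"
    using ent[of 0 2] spl02 t02 by (simp add: N_def)
  have "multilin_eval n \<alpha> a = M"
    using J M e01 e12 e02 by (simp add: vec_eq_iff all3 J3_iff)
  then show ?thesis unfolding multilin_image_def using adm by blast
qed
lemma msmult_UT3: "A \<in> UT3 \<Longrightarrow> msmult s A \<in> UT3" by (simp add: UT3_iff msmult_def)

theorem mainTheorem1:
  fixes \<alpha> :: "(nat \<Rightarrow> nat) \<Rightarrow> 'a::field" and n :: nat
  assumes "infinite (UNIV :: 'a set)" and "n \<ge> 1"
  shows "multilin_image n \<alpha> = UT3 \<or> multilin_image n \<alpha> = J3
       \<or> multilin_image n \<alpha> = J3sq \<or> multilin_image n \<alpha> = {0}"
proof -
  note inf = assms(1) and n = assms(2)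
  define S where "S = (\<Sum>\<sigma>\<in>{\<sigma>. \<sigma> permutes {1..n}}. \<alpha> \<sigma>)"
  have img: "multilin_image n \<alpha> = {multilin_eval n \<alpha> a | a :: nat \<Rightarrow> 'a^3^3. \<forall>i\<in>{1..n}. a i \<in> UT3}"
    by (simp add: multilin_image_def)
  have sub: "multilin_image n \<alpha> \<subseteq> UT3" unfolding img using eval_UT3 by blast
  show ?thesis
  proof (cases "S = 0")
    case False
    have "UT3 \<subseteq> multilin_image n \<alpha>"
    proof
      fix X :: "'a^3^3" assume X: "X \<in> UT3"
      define a :: "nat \<Rightarrow> 'a^3^3" where "a = (\<lambda>_. mat 1)(1 := msmult (1/S) X)"
      have adm: "\<forall>i\<in>{1..n}. a i \<in> UT3" by (simp add: a_def mat1_UT3 msmult_UT3 X)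
      have "multilin_eval n \<alpha> a = X"
        unfolding a_def eval_single[OF n] S_def[symmetric] using False
        by (simp add: msmult_def vec_eq_iff)
      then show "X \<in> multilin_image n \<alpha>" unfolding img using adm by blast
    qed
    then show ?thesis using sub by blast
  next
    case S0: True
    have subJ: "multilin_image n \<alpha> \<subseteq> J3"
    proof
      fix M assume "M \<in> multilin_image n \<alpha>"
      then obtain a where adm: "\<forall>i\<in>{1..n}. a i \<in> UT3" and M: "M = multilin_eval n \<alpha> a"
        unfolding img by blast
      show "M \<in> J3" using eval_UT3[OF adm, of \<alpha>] eval_diag[OF adm, of \<alpha>] S0 M S_def
        by (simp add: UT3_iff J3_iff)
    qed
    show ?thesis
    proof (cases "\<exists>m\<in>{1..n}. \<exists>T. cc n \<alpha> m T \<noteq> 0")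
      case True
      then obtain m T where m: "m \<in> {1..n}" and cT: "cc n \<alpha> m T \<noteq> 0" by blast
      have "J3 \<subseteq> multilin_image n \<alpha>"
      proof
        fix M :: "'a^3^3" assume "M \<in> J3"
        moreover have "(\<Sum>\<sigma>\<in>{\<sigma>. \<sigma> permutes {1..n}}. \<alpha> \<sigma>) = 0" using S0 S_def by simp
        ultimately show "M \<in> multilin_image n \<alpha>" using case1[OF inf m cT] by blast
      qed
      then show ?thesis using subJ by blast
    next
      case False
      have subJ2: "multilin_image n \<alpha> \<subseteq> J3sq"
      proof
        fix M assume "M \<in> multilin_image n \<alpha>"
        then obtain a where adm: "\<forall>i\<in>{1..n}. a i \<in> UT3" and M: "M = multilin_eval n \<alpha> a"
          unfolding img by blast
        have MJ: "M \<in> J3" using subJ \<open>M \<in> multilin_image n \<alpha>\<close> by blast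
        have z: "(multilin_eval n \<alpha> a)$p$q = 0" if "(p,q) \<in> {(0,1),(1,2)}" for p q
          unfolding eval_entry[OF adm that] using False by (intro sum.neutral) auto
        show "M \<in> J3sq" using MJ z[of 0 1] z[of 1 2] M by (simp add: J3_iff J3sq_iff)
      qed
      define a0 :: "nat \<Rightarrow> 'a^3^3" where "a0 = (\<lambda>_. mat 1)"
      have adm0: "\<forall>i\<in>{1..n}. a0 i \<in> UT3" by (simp add: a0_def mat1_UT3)
      have scale: "msmult s (multilin_eval n \<alpha> a) \<in> multilin_image n \<alpha>" if adm: "\<forall>i\<in>{1..n}. a i \<in> UT3" for a :: "nat \<Rightarrow> 'a^3^3" and s
      proof -
        have "\<forall>i\<in>{1..n}. (a(1 := msmult s (a 1))) i \<in> UT3" using adm n by (simp add: msmult_UT3)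
        then show ?thesis unfolding img eval_scale[OF n, symmetric] by blast
      qed
      have zero: "0 \<in> multilin_image n \<alpha>"
      proof -
        have "msmult 0 (multilin_eval n \<alpha> a0) = 0" by (simp add: msmult_def vec_eq_iff)
        then show ?thesis using scale[OF adm0, of 0] by simp
      qed
      show ?thesis
      proof (cases "multilin_image n \<alpha> \<subseteq> {0}")
        case True then show ?thesis using zero by blast
      next
        case False
        then obtain M where MI: "M \<in> multilin_image n \<alpha>" and M0: "M \<noteq> 0" by blast
        then obtain a where adm: "\<forall>i\<in>{1..n}. a i \<in> UT3" and M: "M = multilin_eval n \<alpha> a"
          unfolding img by blast
        have MJ: "M \<in> J3sq" using MI subJ2 by blast
        have M02: "M$0$2 \<noteq> 0" using MJ M0 by (simp add: J3sq_iff vec_eq_iff all3)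
        have "J3sq \<subseteq> multilin_image n \<alpha>"
        proof
          fix X :: "'a^3^3" assume X: "X \<in> J3sq"
          have "msmult (X$0$2 / M$0$2) M = X" using X MJ M02 by (simp add: J3sq_iff vec_eq_iff all3 msmult_def)
          then show "X \<in> multilin_image n \<alpha>" using scale[OF adm, of "X$0$2 / M$0$2"] M by simp
        qed
        then show ?thesis using subJ2 by blast
      qed
    qed
  qed
qed
end
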